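(* Fix $u\in W^{1,\gamma}(\Omega)$. Then, for nonnegative $m\in L^{\beta+1}(\Omega)$ and $h\in L^{\gamma'}(\Gamma_D)$, \[ \frac{\langle A_u(m,h)-A_u(0,0),\,(m,h)\rangle}{\|m\|_{L^{\beta+1}(\Omega)}+\|h\|_{L^{\gamma'}(\Gamma_D)}}\longrightarrow\infty\quad\text{as }\|m\|_{L^{\beta+1}(\Omega)}+\|h\|_{L^{\gamma'}(\Gamma_D)}\to\infty. \]
   Context: Setting. $\Omega\subset\mathbb{R}^d$ is open, bounded, connected, with $C^1$ boundary $\Gamma=\partial\Omega$; $ds$ denotes the surface measure $d\mathcal{H}^{d-1}$. $\Gamma=\overline{\Gamma_D\cup\Gamma_N}$, where $\Gamma_D,\Gamma_N$ are disjoint, nonempty, relatively open $C^1$ $(d-1)$-dimensional manifolds of positive $\mathcal{H}^{d-1}$-measure with $\mathcal{H}^{d-1}(\partial\Gamma_D\cap\partial\Gamma_N)=0$. Boundary values of Sobolev functions are traces. Exponents: $\alpha>1$, $\beta>0$, $\gamma=\frac{\beta+1}{\beta}\alpha$, $\gamma'=\gamma/(\gamma-1)$. Data: $j\in L^{\gamma'}(\Gamma_N)$, $j\ge0$, $j\not\equiv0$. $g:[0,\infty)\to\mathbb{R}$ is continuous and strictly increasing, and there is $C>1$ with $C^{-1}m^\beta-C\le g(m)\le Cm^\beta+C$ for all $m\ge0$. $H:\overline\Omega\times\mathbb{R}^d\to\mathbb{R}$ is measurable in $x$, and for a.e. $x$, $H(x,\cdot)\in C^1(\mathbb{R}^d)$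 is convex; there is $C>1$ such that for a.e. $x\in\Omega$ and all $p\in\mathbb{R}^d$: $|D_pH(x,p)|\le C|p|^{\alpha-1}+C$, $H(x,0)\le C$, and one of the following holds: (a) $H(x,p)\ge C^{-1}|p|^\alpha-C$; (b) $D_pH(x,p)\cdot p\ge C^{-1}|p|^\alpha-C$ and $H(x,p)\ge -C$; (c) $-H(x,p)+D_pH(x,p)\cdot p\ge C^{-1}|p|^\alpha-C$ and $H(x,p)\ge-C$. Auxiliary operator. For fixed $u\in W^{1,\gamma}(\Omega)$, $A_u:L^{\beta+1}(\Omega)\times L^{\gamma'}(\Gamma_D)\to L^{\frac{\beta+1}{\beta}}(\Omega)\times L^\gamma(\Gamma_D)$ is defined (for nonnegative $(m,h)$) by \[\langle A_u(m,h),(\mu,k)\rangle=\int_\Omega(-H(x,Du)+g(m))\mu\,dx+\int_{\Gamma_D}(-u+h^{\gamma'-1})k\,ds.\] *)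

theory Defs
  imports "HOL-Analysis.Analysis"
begin

definition in_Lp :: "'a measure \<Rightarrow> real \<Rightarrow> ('a \<Rightarrow> real) \<Rightarrow> bool" where
  "in_Lp M p f \<longleftrightarrow> f \<in> borel_measurable M \<and> integrable M (\<lambda>x. \<bar>f x\<bar> powr p)"

definition Lp_norm :: "'a measure \<Rightarrow> real \<Rightarrow> ('a \<Rightarrow> real) \<Rightarrow> real" where
  "Lp_norm M p f = (\<integral>x. \<bar>f x\<bar> powr p \<partial>M) powr (1 / p)"

definition test_fun :: "'a::euclidean_space set \<Rightarrow> ('a \<Rightarrow> real) \<Rightarrow> ('a \<Rightarrow> 'a \<Rightarrow> real) \<Rightarrow> bool" where
  "test_fun \<Omega> \<phi> \<phi>' \<longleftrightarrow>
     (\<forall>x. (\<phi> has_derivative \<phi>' x) (at x)) \<and>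
     (\<forall>i\<in>Basis. continuous_on UNIV (\<lambda>x. \<phi>' x i)) \<and>
     compact (closure {x. \<phi> x \<noteq> 0}) \<and> closure {x. \<phi> x \<noteq> 0} \<subseteq> \<Omega>"

definition W1p :: "'a::euclidean_space set \<Rightarrow> real \<Rightarrow> ('a \<Rightarrow> real) \<Rightarrow> ('a \<Rightarrow> 'a) \<Rightarrow> bool" where
  "W1p \<Omega> p u Du \<longleftrightarrow>
     in_Lp (lebesgue_on \<Omega>) p u \<and>
     Du \<in> borel_measurable (lebesgue_on \<Omega>) \<and>
     (\<forall>i\<in>Basis. in_Lp (lebesgue_on \<Omega>) p (\<lambda>x. Du x \<bullet> i)) \<and>
     (\<forall>\<phi> \<phi>'. test_fun \<Omega> \<phi> \<phi>' \<longrightarrow>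
        (\<forall>i\<in>Basis. (\<integral>x. u x * \<phi>' x i \<partial>lebesgue_on \<Omega>)
                   = - (\<integral>x. (Du x \<bullet> i) * \<phi> x \<partial>lebesgue_on \<Omega>)))"

text \<open>The pairing  < A_u(m,h), (mu,k) >.  Here Du is the weak gradient of u,
  tu its trace on Gamma_D, sD the surface measure restricted to Gamma_D,
  gp = gamma'.\<close>
definition A_pair ::
  "'a::euclidean_space set \<Rightarrow> 'a measure \<Rightarrow> real \<Rightarrow> ('a \<Rightarrow> 'a \<Rightarrow> real) \<Rightarrow> (real \<Rightarrow> real)
   \<Rightarrow> ('a \<Rightarrow> 'a) \<Rightarrow> ('a \<Rightarrow> real)
   \<Rightarrow> ('a \<Rightarrow> real) \<Rightarrow> ('a \<Rightarrow> real) \<Rightarrow> ('a \<Rightarrow> real) \<Rightarrow> ('a \<Rightarrow> real) \<Rightarrow> real" where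
  "A_pair \<Omega> sD gp H g Du tu m h \<mu> k =
     (\<integral>x. (- H x (Du x) + g (m x)) * \<mu> x \<partial>lebesgue_on \<Omega>)
   + (\<integral>s. (- tu s + h s powr (gp - 1)) * k s \<partial>sD)"

end

theory Submission
  imports Defs
begin



lemma carath_meas:
  fixes H :: "'a::euclidean_space \<Rightarrow> 'b::euclidean_space \<Rightarrow> real"
  assumes Hm: "\<And>p. (\<lambda>x. H x p) \<in> borel_measurable (lebesgue_on S)"
    and S: "S \<in> sets lebesgue"
    and f: "f \<in> borel_measurable (lebesgue_on S)"
    and cont: "AE x in lebesgue_on S. continuous_on UNIV (H x)"
  shows "(\<lambda>x. H x (f x)) \<in> borel_measurable (lebesgue_on S)"
proof -
  obtain F where F: "\<And>i. simple_function (lebesgue_on S) (F i)"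
    "\<And>x. x \<in> space (lebesgue_on S) \<Longrightarrow> (\<lambda>i. F i x) \<longlonglongrightarrow> f x"
    using borel_measurable_implies_sequence_metric[OF f, of 0] by blast
  have G: "(\<lambda>x. H x (F i x)) \<in> borel_measurable (lebesgue_on S)" for i
  proof (rule measurable_compose_countable'[where I="F i ` space (lebesgue_on S)" and f="\<lambda>p x. H x p"])
    show "(\<lambda>x. H x p) \<in> borel_measurable (lebesgue_on S)" for p by (rule Hm)
    have fin: "finite (F i ` space (lebesgue_on S))" using F(1)[of i] unfolding simple_function_def by blast
    then show "countable (F i ` space (lebesgue_on S))" by (rule countable_finite)
    show "F i \<in> lebesgue_on S \<rightarrow>\<^sub>M count_space (F i ` space (lebesgue_on S))"
      using fin F(1)[of i] unfolding measurable_count_space_eq2[OF fin] simple_function_def by blast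
  qed
  define L where "L x = lim (\<lambda>i. H x (F i x))" for x
  have Lm: "L \<in> borel_measurable (lebesgue_on S)"
    unfolding L_def using G by (rule borel_measurable_lim_metric)
  have ae: "AE x in lebesgue_on S. L x = H x (f x)"
    using cont AE_space
  proof eventually_elim
    case (elim x)
    have "(\<lambda>i. H x (F i x)) \<longlonglongrightarrow> H x (f x)"
      using continuous_on_tendsto_compose[OF elim(1) F(2)[OF elim(2)]] by simp
    then show ?case unfolding L_def by (rule limI)
  qed
  have S': "S \<inter> space lebesgue \<in> sets lebesgue" using S by simp
  have "(\<lambda>x. indicator S x * L x) \<in> borel_measurable lebesgue"
    using Lm borel_measurable_restrict_space_iff[OF S', of L] by simp
  moreover have "AE x in lebesgue. indicator S x * L x = indicator S x * H x (f x)"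
    using ae unfolding AE_restrict_space_iff[OF S'] by eventually_elim (auto simp: indicator_def)
  ultimately have "(\<lambda>x. indicator S x * H x (f x)) \<in> borel_measurable lebesgue"
    by (rule borel_measurable_AE)
  then show ?thesis using borel_measurable_restrict_space_iff[OF S', of "\<lambda>x. H x (f x)"] by simp
qed

lemma convex_tangent0:
  fixes f :: "'b::euclidean_space \<Rightarrow> real"
  assumes cv: "convex_on UNIV f" and d: "(f has_derivative (\<lambda>v. D \<bullet> v)) (at p)"
  shows "f p \<le> f 0 + D \<bullet> p"
proof -
  define \<phi> where "\<phi> t = f (t *\<^sub>R p)" for t :: real
  have cphi: "convex_on UNIV \<phi>"
  proof (rule convex_onI)
    fix t x y :: real assume "0 < t" "t < 1"
    have "\<phi> ((1 - t) *\<^sub>R x + t *\<^sub>R y) = f ((1 - t) *\<^sub>R (x *\<^sub>R p) + t *\<^sub>R (y *\<^sub>R p))"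
      unfolding \<phi>_def by (simp add: algebra_simps)
    also have "\<dots> \<le> (1 - t) * f (x *\<^sub>R p) + t * f (y *\<^sub>R p)"
      using cv \<open>0 < t\<close> \<open>t < 1\<close> unfolding convex_on_def
      by (metis UNIV_I diff_add_cancel less_eq_real_def diff_gt_0_iff_gt)
    finally show "\<phi> ((1 - t) *\<^sub>R x + t *\<^sub>R y) \<le> (1 - t) * \<phi> x + t * \<phi> y" unfolding \<phi>_def by simp
  qed (simp)
  have "((\<lambda>t. t *\<^sub>R p) has_derivative (\<lambda>h. h *\<^sub>R p)) (at 1)"
    by (auto intro!: derivative_eq_intros)
  from has_derivative_compose[OF this, of f "\<lambda>v. D \<bullet> v"] d
  have "(\<phi> has_derivative (\<lambda>h. D \<bullet> (h *\<^sub>R p))) (at 1)" unfolding \<phi>_def by (simp add: o_def)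
  then have "(\<phi> has_field_derivative (D \<bullet> p)) (at 1 within UNIV)"
    unfolding has_field_derivative_def by (simp add: mult.commute[of _ "D \<bullet> p"])
  from convex_on_imp_above_tangent[OF cphi _ _ _ this, of 0]
  have "\<phi> 0 - \<phi> 1 \<ge> (D \<bullet> p) * (0 - 1)" by simp
  then show ?thesis unfolding \<phi>_def by simp
qed


lemma powr_mult_self:
  fixes t a :: real
  assumes "t \<ge> 0" "a > 0"
  shows "t powr a * t = t powr (a + 1)"
proof (cases "t = 0")
  case False then show ?thesis using assms by (simp add: powr_add)
qed simp

lemma lin_le_powr:
  fixes A b p :: real
  assumes "b > 0" "p > 1"
  shows "\<exists>c\<ge>0. \<forall>t\<ge>0. A * t \<le> b * t powr p + c"
proof -
  define T where "T = (\<bar>A\<bar> / b) powr (1 / (p - 1))"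
  have T0: "T \<ge> 0" unfolding T_def by simp
  have AT0: "\<bar>A\<bar> * T \<ge> 0" using T0 by simp
  show ?thesis
  proof (intro exI[of _ "\<bar>A\<bar> * T"] conjI allI impI)
    show "0 \<le> \<bar>A\<bar> * T" by (rule AT0)
    fix t :: real assume t: "t \<ge> 0"
    have bt: "b * t powr p \<ge> 0" using assms by simp
    have At: "A * t \<le> \<bar>A\<bar> * t" using t by (intro mult_right_mono) auto
    show "A * t \<le> b * t powr p + \<bar>A\<bar> * T"
    proof (cases "t \<le> T")
      case True
      have "\<bar>A\<bar> * t \<le> \<bar>A\<bar> * T" using True by (intro mult_left_mono) auto
      then show ?thesis using bt At by linarith
    next
      case False
      then have tT: "t > T" by simp
      have "t powr (p - 1) \<ge> T powr (p - 1)" using tT T0 assms by (intro powr_mono2) auto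
      moreover have "T powr (p - 1) = \<bar>A\<bar> / b" unfolding T_def using assms by (simp add: powr_powr)
      ultimately have "\<bar>A\<bar> / b \<le> t powr (p - 1)" by simp
      then have "\<bar>A\<bar> \<le> b * t powr (p - 1)" using assms by (simp add: divide_le_eq mult.commute)
      then have "\<bar>A\<bar> * t \<le> b * t powr (p - 1) * t" using t by (rule mult_right_mono)
      also have "b * t powr (p - 1) * t = b * t powr p"
        using powr_mult_self[OF t, of "p - 1"] assms by (simp add: mult.assoc)
      finally show ?thesis using At AT0 by linarith
    qed
  qed
qed

lemma le_one_plus_powr:
  fixes t p :: real
  assumes "t \<ge> 0" "p \<ge> 1"
  shows "t \<le> 1 + t powr p"
proof (cases "t \<le> 1")
  case True
  have "t powr p \<ge> 0" by simp
  then show ?thesis using True by linarith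
next
  case False
  then have "t powr 1 \<le> t powr p" using assms by (intro powr_mono) auto
  then show ?thesis using False by simp
qed

lemma sum_powr_le:
  fixes a :: "'i \<Rightarrow> real"
  assumes I: "finite I" "I \<noteq> {}" and a: "\<And>i. i \<in> I \<Longrightarrow> a i \<ge> 0" and q: "q > 0"
  shows "(\<Sum>i\<in>I. a i) powr q \<le> real (card I) powr q * (\<Sum>i\<in>I. a i powr q)"
proof -
  have "Max (a ` I) \<in> a ` I" using I by simp
  then obtain j where j1: "j \<in> I" "a j = Max (a ` I)" by auto
  have j: "j \<in> I" "\<And>i. i \<in> I \<Longrightarrow> a i \<le> a j"
    using j1 I by auto
  have "(\<Sum>i\<in>I. a i) \<le> (\<Sum>i\<in>I. a j)" using j by (intro sum_mono) auto
  also have "\<dots> = real (card I) * a j" by simp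
  finally have s: "(\<Sum>i\<in>I. a i) \<le> real (card I) * a j" .
  have "(\<Sum>i\<in>I. a i) powr q \<le> (real (card I) * a j) powr q"
    using s a q by (intro powr_mono2) (auto intro: sum_nonneg)
  also have "\<dots> = real (card I) powr q * a j powr q" using a j by (simp add: powr_mult)
  also have "\<dots> \<le> real (card I) powr q * (\<Sum>i\<in>I. a i powr q)"
    using j I by (intro mult_left_mono member_le_sum) auto
  finally show ?thesis .
qed

lemma comp_meas_nonneg:
  fixes g :: "real \<Rightarrow> real"
  assumes g: "continuous_on {0..} g" and m: "m \<in> borel_measurable M"
    and nn: "\<And>x. x \<in> space M \<Longrightarrow> m x \<ge> 0"
  shows "(\<lambda>x. g (m x)) \<in> borel_measurable M"
proof -
  have "continuous_on UNIV (\<lambda>y. g (max 0 y))"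
    by (rule continuous_on_compose2[OF g]) (auto intro!: continuous_intros)
  then have "(\<lambda>y. g (max 0 y)) \<in> borel_measurable borel" by (rule borel_measurable_continuous_onI)
  from measurable_compose[OF m this] have "(\<lambda>x. g (max 0 (m x))) \<in> borel_measurable M" .
  then show ?thesis by (rule measurable_cong[THEN iffD1, rotated]) (simp add: nn max_def)
qed

lemma g_pt:
  fixes C \<beta> t G G0 :: real
  assumes C: "C > 1" and b: "\<beta> > 0" and t: "t \<ge> 0"
    and lo: "t powr \<beta> / C - C \<le> G" and hi: "G \<le> C * t powr \<beta> + C"
  shows "\<bar>G * t\<bar> \<le> C * t powr (\<beta> + 1) + C * (1 + t powr (\<beta> + 1))"
    and "(G - G0) * t \<ge> t powr (\<beta> + 1) / C - (C + \<bar>G0\<bar>) * t"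
proof -
  have e: "t powr \<beta> * t = t powr (\<beta> + 1)" using powr_mult_self[OF t b] .
  have "t powr \<beta> / C \<ge> 0" using C by simp
  moreover have "C * t powr \<beta> \<ge> 0" using C by simp
  ultimately have aG: "\<bar>G\<bar> \<le> C * t powr \<beta> + C" using lo hi C unfolding abs_le_iff by linarith
  have "\<bar>G * t\<bar> = \<bar>G\<bar> * t" using t by (simp add: abs_mult)
  also have "\<dots> \<le> (C * t powr \<beta> + C) * t" using aG t by (rule mult_right_mono)
  also have "\<dots> = C * t powr (\<beta> + 1) + C * t" unfolding distrib_right mult.assoc e ..
  also have "\<dots> \<le> C * t powr (\<beta> + 1) + C * (1 + t powr (\<beta> + 1))"
    using le_one_plus_powr[OF t, of "\<beta> + 1"] b C by (intro add_left_mono mult_left_mono) auto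
  finally show "\<bar>G * t\<bar> \<le> C * t powr (\<beta> + 1) + C * (1 + t powr (\<beta> + 1))" .
  have "(G - G0) * t \<ge> (t powr \<beta> / C - C - G0) * t" using lo t by (intro mult_right_mono) auto
  moreover have "(t powr \<beta> / C - C - G0) * t = t powr (\<beta> + 1) / C - (C + G0) * t"
    using e by (simp add: algebra_simps)
  moreover have "(C + G0) * t \<le> (C + \<bar>G0\<bar>) * t" using t by (intro mult_right_mono) auto
  ultimately show "(G - G0) * t \<ge> t powr (\<beta> + 1) / C - (C + \<bar>G0\<bar>) * t" by linarith
qed

lemma low_pt:
  fixes Gd P C A t c :: real
  assumes "Gd \<ge> P / C - A * t" "A * t \<le> 1 / (2 * C) * P + c" "C > 0"
  shows "1 / (2 * C) * P - c \<le> Gd"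
proof -
  have "P / C = 2 * (1 / (2 * C) * P)" using assms(3) by (simp add: field_simps)
  then show ?thesis using assms(1,2) by linarith
qed

lemma div_le_self:
  fixes x P :: real
  assumes "x \<ge> 0" "P \<ge> 1"
  shows "x / P \<le> x"
  using divide_left_mono[of 1 P x] assms by simp

lemma F_pt:
  fixes CH a t Fv \<alpha> \<beta> \<gamma> :: real
  assumes CH: "CH > 0" and F: "\<bar>Fv\<bar> \<le> CH * (1 + a powr \<alpha> + a)" and a: "a \<ge> 0" and t: "t \<ge> 0"
    and al: "\<alpha> > 1" and b: "\<beta> > 0" and g: "\<alpha> * ((\<beta> + 1) / \<beta>) = \<gamma>"
  shows "\<bar>Fv * t\<bar> \<le> 2 * CH * (1 + 2 * t powr (\<beta> + 1) + a powr \<gamma>)"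
proof -
  have a1: "a \<le> 1 + a powr \<alpha>" using le_one_plus_powr[OF a, of \<alpha>] al by simp
  have t1: "t \<le> 1 + t powr (\<beta> + 1)" using le_one_plus_powr[OF t, of "\<beta> + 1"] b by simp
  have P1: "(\<beta> + 1) / \<beta> > 1" using b by (simp add: field_simps)
  have Q1: "\<beta> + 1 > 1" using b by simp
  have cj: "1 / ((\<beta> + 1) / \<beta>) + 1 / (\<beta> + 1) = 1" using b by (simp add: field_simps)
  have Y: "a powr \<alpha> * t \<le> (a powr \<alpha>) powr ((\<beta> + 1) / \<beta>) / ((\<beta> + 1) / \<beta>) + t powr (\<beta> + 1) / (\<beta> + 1)"
    using Youngs_inequality[OF P1 Q1 cj, of "a powr \<alpha>" t] t by simp
  have eq: "(a powr \<alpha>) powr ((\<beta> + 1) / \<beta>) = a powr \<gamma>" using g by (simp add: powr_powr)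
  have d1: "a powr \<gamma> / ((\<beta> + 1) / \<beta>) \<le> a powr \<gamma>"
    using P1 by (intro div_le_self) auto
  have d2: "t powr (\<beta> + 1) / (\<beta> + 1) \<le> t powr (\<beta> + 1)"
    using Q1 by (intro div_le_self) auto
  have Y2: "a powr \<alpha> * t \<le> a powr \<gamma> + t powr (\<beta> + 1)"
    using Y unfolding eq using add_mono[OF d1 d2] by (rule order.trans)
  have "\<bar>Fv * t\<bar> = \<bar>Fv\<bar> * t" using t by (simp add: abs_mult)
  also have "\<dots> \<le> CH * (1 + a powr \<alpha> + a) * t" using F t by (rule mult_right_mono)
  also have "\<dots> \<le> CH * (2 + 2 * a powr \<alpha>) * t"
    using a1 CH t by (intro mult_right_mono mult_left_mono) auto
  also have "\<dots> = 2 * CH * (t + a powr \<alpha> * t)" by (simp add: algebra_simps)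
  also have "\<dots> \<le> 2 * CH * (1 + 2 * t powr (\<beta> + 1) + a powr \<gamma>)"
    using Y2 t1 CH by (intro mult_left_mono) auto
  finally show ?thesis .
qed

lemma powr_inv_powr:
  fixes S q :: real
  assumes "S \<ge> 0" "q > 0"
  shows "(S powr (1 / q)) powr q = S"
  using assms by (simp add: powr_powr)

theorem proposition4p6:
  fixes \<Omega> \<Gamma>D \<Gamma>N :: "'a::euclidean_space set"
    and \<sigma> :: "'a measure"
    and \<alpha> \<beta> \<gamma> \<gamma>' C\<^sub>g C\<^sub>H :: real
    and g :: "real \<Rightarrow> real"
    and H :: "'a \<Rightarrow> 'a \<Rightarrow> real" and DH :: "'a \<Rightarrow> 'a \<Rightarrow> 'a"
    and u :: "'a \<Rightarrow> real" and Du :: "'a \<Rightarrow> 'a" and tu :: "'a \<Rightarrow> real"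
  assumes \<Omega>: "open \<Omega>" "bounded \<Omega>" "connected \<Omega>" "\<Omega> \<noteq> {}"
    and \<Gamma>: "\<Gamma>D \<subseteq> frontier \<Omega>" "\<Gamma>N \<subseteq> frontier \<Omega>" "\<Gamma>D \<inter> \<Gamma>N = {}"
       "frontier \<Omega> = closure (\<Gamma>D \<union> \<Gamma>N)"
       "openin (top_of_set (frontier \<Omega>)) \<Gamma>D" "openin (top_of_set (frontier \<Omega>)) \<Gamma>N"
    and \<sigma>: "sets \<sigma> = sets lborel" "emeasure \<sigma> (frontier \<Omega>) < \<infinity>"
       "emeasure \<sigma> \<Gamma>D > 0" "emeasure \<sigma> \<Gamma>N > 0"
    and exps: "\<alpha> > 1" "\<beta> > 0" "\<gamma> = (\<beta> + 1) / \<beta> * \<alpha>" "\<gamma>' = \<gamma> / (\<gamma> - 1)"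
    and g_cont: "continuous_on {0..} g" and g_mono: "strict_mono_on {0..} g"
    and g_growth: "C\<^sub>g > 1" "\<And>m. m \<ge> 0 \<Longrightarrow> m powr \<beta> / C\<^sub>g - C\<^sub>g \<le> g m \<and> g m \<le> C\<^sub>g * m powr \<beta> + C\<^sub>g"
    and H_meas: "\<And>p. (\<lambda>x. H x p) \<in> borel_measurable (lebesgue_on (closure \<Omega>))"
    and H_C1: "AE x in lebesgue_on \<Omega>.
          (\<forall>p. (H x has_derivative (\<lambda>v. DH x p \<bullet> v)) (at p)) \<and> continuous_on UNIV (DH x)
          \<and> convex_on UNIV (H x)"
    and H_growth: "C\<^sub>H > 1"
       "AE x in lebesgue_on \<Omega>. \<forall>p. norm (DH x p) \<le> C\<^sub>H * norm p powr (\<alpha> - 1) + C\<^sub>H \<and> H x 0 \<le> C\<^sub>H"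
    and H_coerc:
       "(AE x in lebesgue_on \<Omega>. \<forall>p. H x p \<ge> norm p powr \<alpha> / C\<^sub>H - C\<^sub>H)
      \<or> (AE x in lebesgue_on \<Omega>. \<forall>p. DH x p \<bullet> p \<ge> norm p powr \<alpha> / C\<^sub>H - C\<^sub>H \<and> H x p \<ge> - C\<^sub>H)
      \<or> (AE x in lebesgue_on \<Omega>. \<forall>p. - H x p + DH x p \<bullet> p \<ge> norm p powr \<alpha> / C\<^sub>H - C\<^sub>H
                                      \<and> H x p \<ge> - C\<^sub>H)"
    and u: "W1p \<Omega> \<gamma> u Du"
    and tu: "in_Lp (restrict_space \<sigma> \<Gamma>D) \<gamma> tu"
  shows "\<forall>K. \<exists>R. \<forall>m h.
            in_Lp (lebesgue_on \<Omega>) (\<beta> + 1) m \<and> (\<forall>x\<in>\<Omega>. m x \<ge> 0) \<and>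
            in_Lp (restrict_space \<sigma> \<Gamma>D) \<gamma>' h \<and> (\<forall>s\<in>\<Gamma>D. h s \<ge> 0) \<and>
            Lp_norm (lebesgue_on \<Omega>) (\<beta> + 1) m + Lp_norm (restrict_space \<sigma> \<Gamma>D) \<gamma>' h \<ge> R
          \<longrightarrow> (A_pair \<Omega> (restrict_space \<sigma> \<Gamma>D) \<gamma>' H g Du tu m h m h
                - A_pair \<Omega> (restrict_space \<sigma> \<Gamma>D) \<gamma>' H g Du tu (\<lambda>_. 0) (\<lambda>_. 0) m h)
              / (Lp_norm (lebesgue_on \<Omega>) (\<beta> + 1) m + Lp_norm (restrict_space \<sigma> \<Gamma>D) \<gamma>' h)
              \<ge> K"
  proof (intro allI)
  fix K :: real
  let ?M = "lebesgue_on \<Omega>"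
  let ?N = "restrict_space \<sigma> \<Gamma>D"
  let ?p = "\<beta> + 1"
  have p1: "?p > 1" using exps by simp
  have b1: "(\<beta> + 1) / \<beta> > 1" using exps by (simp add: field_simps)
  have g1: "\<gamma> > 1"
  proof -
    have "1 * 1 < (\<beta> + 1) / \<beta> * \<alpha>" using b1 exps by (intro mult_strict_mono) auto
    then show ?thesis using exps by simp
  qed
  have gp1: "\<gamma>' > 1" using g1 exps(4) by (simp add: less_divide_eq_1_pos)
  have conj: "1 / \<gamma> + 1 / \<gamma>' = 1"
  proof -
    have "1 / \<gamma> + 1 / \<gamma>' = 1 / \<gamma> + (\<gamma> - 1) / \<gamma>" using exps(4) by simp
    also have "\<dots> = 1" using g1 by (simp add: field_simps)
    finally show ?thesis .
  qed
  have conj2: "1 / ((\<beta> + 1) / \<beta>) + 1 / ?p = 1" using exps by (simp add: field_simps)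
  have gam_eq: "\<alpha> * ((\<beta> + 1) / \<beta>) = \<gamma>" using exps by simp
  have CH: "C\<^sub>H > 1" by (rule H_growth(1))
  have Cg: "C\<^sub>g > 1" by (rule g_growth(1))

  have \<Omega>l: "\<Omega> \<in> sets lebesgue" using \<Omega>(1) by simp
  have \<Omega>lm: "\<Omega> \<in> lmeasurable" using \<Omega>(2) \<Omega>l by (rule bounded_set_imp_lmeasurable)
  interpret M: finite_measure ?M using \<Omega>lm by (rule finite_measure_lebesgue_on)
  have spM: "space ?M = \<Omega>" by simp

  have Dum[measurable]: "Du \<in> borel_measurable ?M" using u unfolding W1p_def by blast
  have Dui: "\<And>i. i \<in> Basis \<Longrightarrow> integrable ?M (\<lambda>x. \<bar>Du x \<bullet> i\<bar> powr \<gamma>)"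
    using u unfolding W1p_def in_Lp_def by blast
  have NDu: "integrable ?M (\<lambda>x. norm (Du x) powr \<gamma>)"
  proof (rule Bochner_Integration.integrable_bound)
    show "integrable ?M (\<lambda>x. real (card (Basis::'a set)) powr \<gamma> * (\<Sum>i\<in>Basis. \<bar>Du x \<bullet> i\<bar> powr \<gamma>))"
      using Dui by (intro integrable_mult_right integrable_sum) auto
    show "(\<lambda>x. norm (Du x) powr \<gamma>) \<in> borel_measurable ?M" by measurable
    show "AE x in ?M. norm (norm (Du x) powr \<gamma>)
        \<le> norm (real (card (Basis::'a set)) powr \<gamma> * (\<Sum>i\<in>Basis. \<bar>Du x \<bullet> i\<bar> powr \<gamma>))"
    proof (rule AE_I2)
      fix x
      have "norm (Du x) powr \<gamma> \<le> (\<Sum>i\<in>Basis. \<bar>Du x \<bullet> i\<bar>) powr \<gamma>"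
        using g1 by (intro powr_mono2 norm_le_l1) auto
      also have "\<dots> \<le> real (card (Basis::'a set)) powr \<gamma> * (\<Sum>i\<in>Basis. \<bar>Du x \<bullet> i\<bar> powr \<gamma>)"
        using g1 by (intro sum_powr_le) auto
      finally show "norm (norm (Du x) powr \<gamma>)
        \<le> norm (real (card (Basis::'a set)) powr \<gamma> * (\<Sum>i\<in>Basis. \<bar>Du x \<bullet> i\<bar> powr \<gamma>))"
        by (simp add: sum_nonneg)
    qed
  qed

  have Fm[measurable]: "(\<lambda>x. H x (Du x)) \<in> borel_measurable ?M"
  proof (rule carath_meas[OF _ \<Omega>l Dum])
    show "(\<lambda>x. H x p) \<in> borel_measurable ?M" for p :: 'a
      using H_meas[of p] closure_subset by (rule measurable_restrict_mono)
    show "AE x in ?M. continuous_on UNIV (H x)"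
      using H_C1 by eventually_elim
        (auto intro!: continuous_at_imp_continuous_on dest: has_derivative_continuous)
  qed
  have Hlow: "AE x in ?M. \<forall>p. H x p \<ge> - C\<^sub>H"
    using H_coerc
  proof (elim disjE)
    assume "AE x in ?M. \<forall>p. H x p \<ge> norm p powr \<alpha> / C\<^sub>H - C\<^sub>H"
    then show ?thesis
    proof eventually_elim
      case (elim x)
      show ?case
      proof
        fix p :: 'a
        have "norm p powr \<alpha> / C\<^sub>H \<ge> 0" using CH by simp
        then show "H x p \<ge> - C\<^sub>H" using elim[rule_format, of p] by linarith
      qed
    qed
  qed (auto elim!: eventually_mono)
  have Fbd: "AE x in ?M. \<bar>H x (Du x)\<bar> \<le> C\<^sub>H * (1 + norm (Du x) powr \<alpha> + norm (Du x))"
    using H_C1 H_growth(2) Hlow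
  proof eventually_elim
    case (elim x)
    let ?P = "Du x"
    have "H x ?P \<le> H x 0 + DH x ?P \<bullet> ?P"
      using elim(1) by (intro convex_tangent0) auto
    also have "\<dots> \<le> C\<^sub>H + norm (DH x ?P) * norm ?P"
    proof -
      have h0: "H x 0 \<le> C\<^sub>H" using elim(2) by blast
      then show ?thesis using norm_cauchy_schwarz[of "DH x ?P" ?P] by linarith
    qed
    also have "\<dots> \<le> C\<^sub>H + (C\<^sub>H * norm ?P powr (\<alpha> - 1) + C\<^sub>H) * norm ?P"
      using elim(2) by (intro add_left_mono mult_right_mono) auto
    also have "\<dots> = C\<^sub>H * (1 + norm ?P powr \<alpha> + norm ?P)"
    proof -
      have e: "norm ?P powr (\<alpha> - 1) * norm ?P = norm ?P powr \<alpha>"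
        using powr_mult_self[of "norm ?P" "\<alpha> - 1"] exps by simp
      show ?thesis unfolding distrib_right mult.assoc e by (simp add: distrib_left)
    qed
    finally have up: "H x ?P \<le> C\<^sub>H * (1 + norm ?P powr \<alpha> + norm ?P)" .
    have "C\<^sub>H * (1 + norm ?P powr \<alpha> + norm ?P) \<ge> C\<^sub>H" using CH by simp
    moreover have "H x ?P \<ge> - C\<^sub>H" using elim(3) by blast
    ultimately show ?case using up unfolding abs_le_iff by linarith
  qed
  show "\<exists>R. \<forall>m h.
            in_Lp (lebesgue_on \<Omega>) (\<beta> + 1) m \<and> (\<forall>x\<in>\<Omega>. m x \<ge> 0) \<and>
            in_Lp (restrict_space \<sigma> \<Gamma>D) \<gamma>' h \<and> (\<forall>s\<in>\<Gamma>D. h s \<ge> 0) \<and>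
            Lp_norm (lebesgue_on \<Omega>) (\<beta> + 1) m + Lp_norm (restrict_space \<sigma> \<Gamma>D) \<gamma>' h \<ge> R
          \<longrightarrow> (A_pair \<Omega> (restrict_space \<sigma> \<Gamma>D) \<gamma>' H g Du tu m h m h
                - A_pair \<Omega> (restrict_space \<sigma> \<Gamma>D) \<gamma>' H g Du tu (\<lambda>_. 0) (\<lambda>_. 0) m h)
              / (Lp_norm (lebesgue_on \<Omega>) (\<beta> + 1) m + Lp_norm (restrict_space \<sigma> \<Gamma>D) \<gamma>' h)
              \<ge> K"
  proof -
    have \<Gamma>Ds: "\<Gamma>D \<in> sets \<sigma>"
    proof -
      obtain T where T: "open T" "\<Gamma>D = frontier \<Omega> \<inter> T"
        using \<Gamma>(5) unfolding openin_open by (metis inf_commute)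
      have "frontier \<Omega> \<inter> T \<in> sets borel" using T(1) by (intro sets.Int borel_closed borel_open) auto
      then show ?thesis using T(2) \<sigma>(1) by simp
    qed
    have sp\<sigma>: "space \<sigma> = UNIV" using sets_eq_imp_space_eq[OF \<sigma>(1)] by simp
    have spN: "space ?N = \<Gamma>D" using sp\<sigma> by (simp add: space_restrict_space)
    have tum[measurable]: "tu \<in> borel_measurable ?N" using tu unfolding in_Lp_def by blast
    have tuint: "integrable ?N (\<lambda>s. \<bar>tu s\<bar> powr \<gamma>)" using tu unfolding in_Lp_def by blast
    define A1 where "A1 = C\<^sub>g + \<bar>g 0\<bar>"
    have Cg0: "1 / (2 * C\<^sub>g) > 0" using Cg by simp
    obtain c1 where c1: "c1 \<ge> 0" "\<And>t. t \<ge> 0 \<Longrightarrow> A1 * t \<le> 1 / (2 * C\<^sub>g) * t powr ?p + c1"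
      using lin_le_powr[OF Cg0 p1, of A1] by blast
    obtain c2 where c2: "c2 \<ge> 0" "\<And>t. t \<ge> 0 \<Longrightarrow> (K + 1) * t \<le> 1 / (2 * C\<^sub>g) * t powr ?p + c2"
      using lin_le_powr[OF Cg0 p1, of "K + 1"] by blast
    obtain c3 where c3: "c3 \<ge> 0" "\<And>t. t \<ge> 0 \<Longrightarrow> (K + 1) * t \<le> 1 * t powr \<gamma>' + c3"
      using lin_le_powr[OF _ gp1, of 1 "K + 1"] by auto
    define \<mu> where "\<mu> = measure ?M \<Omega>"
    have \<mu>0: "\<mu> \<ge> 0" unfolding \<mu>_def by simp
    define c where "c = c1 * \<mu> + c2 + c3"
    have c0: "c \<ge> 0" unfolding c_def using c1 c2 c3 \<mu>0 by simp
    show ?thesis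
    proof (intro exI[of _ "max 1 c"] allI impI)
      fix m h :: "'a \<Rightarrow> real"
      assume A: "in_Lp (lebesgue_on \<Omega>) (\<beta> + 1) m \<and> (\<forall>x\<in>\<Omega>. m x \<ge> 0) \<and>
            in_Lp (restrict_space \<sigma> \<Gamma>D) \<gamma>' h \<and> (\<forall>s\<in>\<Gamma>D. h s \<ge> 0) \<and>
            Lp_norm (lebesgue_on \<Omega>) (\<beta> + 1) m + Lp_norm (restrict_space \<sigma> \<Gamma>D) \<gamma>' h \<ge> max 1 c"
      have mm[measurable]: "m \<in> borel_measurable ?M" using A unfolding in_Lp_def by blast
      have mp: "integrable ?M (\<lambda>x. \<bar>m x\<bar> powr ?p)" using A unfolding in_Lp_def by blast
      have mnn: "\<And>x. x \<in> space ?M \<Longrightarrow> m x \<ge> 0" using A by simp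
      have hm[measurable]: "h \<in> borel_measurable ?N" using A unfolding in_Lp_def by blast
      have hp: "integrable ?N (\<lambda>s. \<bar>h s\<bar> powr \<gamma>')" using A unfolding in_Lp_def by blast
      have hnn: "\<And>s. s \<in> space ?N \<Longrightarrow> h s \<ge> 0" using A spN by simp
      have AEM: "AE x in ?M. m x \<ge> 0" using mnn by (intro AE_I2) auto

      have mint: "integrable ?M m"
      proof (rule Bochner_Integration.integrable_bound)
        show "integrable ?M (\<lambda>x. 1 + \<bar>m x\<bar> powr ?p)" using mp by simp
        show "AE x in ?M. norm (m x) \<le> norm (1 + \<bar>m x\<bar> powr ?p)"
          using le_one_plus_powr[of "\<bar>m _\<bar>" ?p] exps by (intro AE_I2) simp
      qed (rule mm)
      have gmm[measurable]: "(\<lambda>x. g (m x)) \<in> borel_measurable ?M"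
        by (rule comp_meas_nonneg[OF g_cont mm mnn])
      have gmint: "integrable ?M (\<lambda>x. g (m x) * m x)"
      proof (rule Bochner_Integration.integrable_bound)
        show "integrable ?M (\<lambda>x. C\<^sub>g * \<bar>m x\<bar> powr ?p + C\<^sub>g * (1 + \<bar>m x\<bar> powr ?p))" using mp by simp
        show "(\<lambda>x. g (m x) * m x) \<in> borel_measurable ?M" by measurable
        show "AE x in ?M. norm (g (m x) * m x) \<le> norm (C\<^sub>g * \<bar>m x\<bar> powr ?p + C\<^sub>g * (1 + \<bar>m x\<bar> powr ?p))"
          using AEM
        proof eventually_elim
          case (elim x)
          have "\<bar>g (m x) * m x\<bar> \<le> C\<^sub>g * m x powr ?p + C\<^sub>g * (1 + m x powr ?p)"
            using g_pt(1)[OF Cg exps(2) elim] g_growth(2)[OF elim] by blast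
          moreover have "C\<^sub>g * m x powr ?p + C\<^sub>g * (1 + m x powr ?p) \<ge> 0" using Cg by simp
          ultimately show ?case using elim by simp
        qed
      qed
      have Fmint: "integrable ?M (\<lambda>x. H x (Du x) * m x)"
      proof (rule Bochner_Integration.integrable_bound)
        show "integrable ?M (\<lambda>x. 2 * C\<^sub>H * (1 + 2 * \<bar>m x\<bar> powr ?p + norm (Du x) powr \<gamma>))"
          using mp NDu by simp
        show "(\<lambda>x. H x (Du x) * m x) \<in> borel_measurable ?M" by measurable
        show "AE x in ?M. norm (H x (Du x) * m x) \<le> norm (2 * C\<^sub>H * (1 + 2 * \<bar>m x\<bar> powr ?p + norm (Du x) powr \<gamma>))"
          using AEM Fbd
        proof eventually_elim
          case (elim x)
          have "\<bar>H x (Du x) * m x\<bar> \<le> 2 * C\<^sub>H * (1 + 2 * m x powr ?p + norm (Du x) powr \<gamma>)"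
            using F_pt[OF _ elim(2) norm_ge_zero elim(1) exps(1,2) gam_eq] CH by simp
          moreover have "2 * C\<^sub>H * (1 + 2 * m x powr ?p + norm (Du x) powr \<gamma>) \<ge> 0" using CH by simp
          ultimately show ?case using elim by simp
        qed
      qed
      have tuh: "integrable ?N (\<lambda>s. tu s * h s)"
      proof (rule Bochner_Integration.integrable_bound)
        show "integrable ?N (\<lambda>s. \<bar>tu s\<bar> powr \<gamma> + \<bar>h s\<bar> powr \<gamma>')" using tuint hp by simp
        show "(\<lambda>s. tu s * h s) \<in> borel_measurable ?N" by measurable
        show "AE s in ?N. norm (tu s * h s) \<le> norm (\<bar>tu s\<bar> powr \<gamma> + \<bar>h s\<bar> powr \<gamma>')"
        proof (rule AE_I2)
          fix s
          have Y: "\<bar>tu s\<bar> * \<bar>h s\<bar> \<le> \<bar>tu s\<bar> powr \<gamma> / \<gamma> + \<bar>h s\<bar> powr \<gamma>' / \<gamma>'"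
            using Youngs_inequality[OF g1 gp1 conj] by simp
          have "\<bar>tu s\<bar> powr \<gamma> / \<gamma> \<le> \<bar>tu s\<bar> powr \<gamma>"
            using g1 by (intro div_le_self) auto
          moreover have "\<bar>h s\<bar> powr \<gamma>' / \<gamma>' \<le> \<bar>h s\<bar> powr \<gamma>'"
            using gp1 by (intro div_le_self) auto
          ultimately show "norm (tu s * h s) \<le> norm (\<bar>tu s\<bar> powr \<gamma> + \<bar>h s\<bar> powr \<gamma>')"
            using Y by (simp add: abs_mult)
        qed
      qed

      define N1 where "N1 = Lp_norm ?M ?p m"
      define N2 where "N2 = Lp_norm ?N \<gamma>' h"
      define S1 where "S1 = (\<integral>x. \<bar>m x\<bar> powr ?p \<partial>?M)"
      define S2 where "S2 = (\<integral>s. \<bar>h s\<bar> powr \<gamma>' \<partial>?N)"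
      have S10: "S1 \<ge> 0" unfolding S1_def by simp
      have S20: "S2 \<ge> 0" unfolding S2_def by simp
      have N10: "N1 \<ge> 0" unfolding N1_def Lp_norm_def by simp
      have N20: "N2 \<ge> 0" unfolding N2_def Lp_norm_def by simp
      have N1p: "N1 powr ?p = S1" unfolding N1_def Lp_norm_def S1_def[symmetric]
        using S10 exps by (intro powr_inv_powr) auto
      have N2p: "N2 powr \<gamma>' = S2" unfolding N2_def Lp_norm_def S2_def[symmetric]
        using S20 gp1 by (intro powr_inv_powr) auto

      define IFm where "IFm = (\<integral>x. H x (Du x) * m x \<partial>?M)"
      define Igm where "Igm = (\<integral>x. g (m x) * m x \<partial>?M)"
      define Im where "Im = (\<integral>x. m x \<partial>?M)"
      define Ith where "Ith = (\<integral>s. tu s * h s \<partial>?N)"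
      have I1: "(\<integral>x. (- H x (Du x) + g (m x)) * m x \<partial>?M) = Igm - IFm"
      proof -
        have "(\<integral>x. (- H x (Du x) + g (m x)) * m x \<partial>?M) = (\<integral>x. g (m x) * m x - H x (Du x) * m x \<partial>?M)"
          by (simp add: algebra_simps)
        also have "\<dots> = Igm - IFm" unfolding Igm_def IFm_def using gmint Fmint by (rule Bochner_Integration.integral_diff)
        finally show ?thesis .
      qed
      have I2: "(\<integral>x. (- H x (Du x) + g 0) * m x \<partial>?M) = g 0 * Im - IFm"
      proof -
        have "(\<integral>x. (- H x (Du x) + g 0) * m x \<partial>?M) = (\<integral>x. g 0 * m x - H x (Du x) * m x \<partial>?M)"
          by (simp add: algebra_simps)
        also have "\<dots> = (\<integral>x. g 0 * m x \<partial>?M) - IFm" unfolding IFm_def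
          using mint Fmint by (intro Bochner_Integration.integral_diff) auto
        finally show ?thesis unfolding Im_def by simp
      qed
      have J1: "(\<integral>s. (- tu s + h s powr (\<gamma>' - 1)) * h s \<partial>?N) = S2 - Ith"
      proof -
        have "(\<integral>s. (- tu s + h s powr (\<gamma>' - 1)) * h s \<partial>?N) = (\<integral>s. \<bar>h s\<bar> powr \<gamma>' - tu s * h s \<partial>?N)"
        proof (rule Bochner_Integration.integral_cong[OF refl])
          fix s assume s: "s \<in> space ?N"
          have e: "h s powr (\<gamma>' - 1) * h s = h s powr (\<gamma>' - 1 + 1)"
            using gp1 by (intro powr_mult_self[OF hnn[OF s]]) simp
          have e2: "h s powr (\<gamma>' - 1 + 1) = \<bar>h s\<bar> powr \<gamma>'"
            using hnn[OF s] by simp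
          show "(- tu s + h s powr (\<gamma>' - 1)) * h s = \<bar>h s\<bar> powr \<gamma>' - tu s * h s"
            unfolding distrib_right e e2 by simp
        qed
        also have "\<dots> = S2 - Ith" unfolding S2_def Ith_def using hp tuh by (rule Bochner_Integration.integral_diff)
        finally show ?thesis .
      qed
      have J2: "(\<integral>s. (- tu s + 0 powr (\<gamma>' - 1)) * h s \<partial>?N) = - Ith"
        unfolding Ith_def by simp

      have diff: "A_pair \<Omega> ?N \<gamma>' H g Du tu m h m h - A_pair \<Omega> ?N \<gamma>' H g Du tu (\<lambda>_. 0) (\<lambda>_. 0) m h
          = (Igm - g 0 * Im) + S2"
        unfolding A_pair_def I1 I2 J1 J2 by simp
      have low1: "Igm - g 0 * Im \<ge> 1 / (2 * C\<^sub>g) * S1 - \<mu> * c1"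
      proof -
        have "Igm - g 0 * Im = (\<integral>x. g (m x) * m x - g 0 * m x \<partial>?M)"
          unfolding Igm_def Im_def using gmint mint by (subst Bochner_Integration.integral_diff) auto
        also have "\<dots> \<ge> (\<integral>x. 1 / (2 * C\<^sub>g) * \<bar>m x\<bar> powr ?p - c1 \<partial>?M)"
        proof (rule integral_mono)
          show "integrable ?M (\<lambda>x. 1 / (2 * C\<^sub>g) * \<bar>m x\<bar> powr ?p - c1)" using mp by simp
          show "integrable ?M (\<lambda>x. g (m x) * m x - g 0 * m x)" using gmint mint by simp
          fix x assume x: "x \<in> space ?M"
          have t: "m x \<ge> 0" using mnn[OF x] .
          have "(g (m x) - g 0) * m x \<ge> m x powr ?p / C\<^sub>g - A1 * m x"
            unfolding A1_def using g_pt(2)[OF Cg exps(2) t] g_growth(2)[OF t] by blast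
          moreover have "A1 * m x \<le> 1 / (2 * C\<^sub>g) * m x powr ?p + c1" using c1(2)[OF t] .
          ultimately have "1 / (2 * C\<^sub>g) * m x powr ?p - c1 \<le> (g (m x) - g 0) * m x"
            using Cg by (intro low_pt) auto
          then show "1 / (2 * C\<^sub>g) * \<bar>m x\<bar> powr ?p - c1 \<le> g (m x) * m x - g 0 * m x"
            using t by (simp only: abs_of_nonneg left_diff_distrib)
        qed
        also have "(\<integral>x. 1 / (2 * C\<^sub>g) * \<bar>m x\<bar> powr ?p - c1 \<partial>?M)
            = (\<integral>x. 1 / (2 * C\<^sub>g) * \<bar>m x\<bar> powr ?p \<partial>?M) - (\<integral>x. c1 \<partial>?M)"
          by (rule Bochner_Integration.integral_diff) (use mp in auto)
        also have "\<dots> = 1 / (2 * C\<^sub>g) * S1 - \<mu> * c1"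
          unfolding S1_def \<mu>_def by simp
        finally show ?thesis by simp
      qed
      have f2: "(K + 1) * N1 \<le> 1 / (2 * C\<^sub>g) * S1 + c2" using c2(2)[OF N10] N1p by simp
      have f3: "(K + 1) * N2 \<le> S2 + c3" using c3(2)[OF N20] N2p by simp
      have D: "A_pair \<Omega> ?N \<gamma>' H g Du tu m h m h - A_pair \<Omega> ?N \<gamma>' H g Du tu (\<lambda>_. 0) (\<lambda>_. 0) m h
          \<ge> (K + 1) * (N1 + N2) - c"
        unfolding diff c_def using low1 f2 f3 distrib_left[of "K + 1" N1 N2] mult.commute[of c1 \<mu>] by linarith
      have SR: "N1 + N2 \<ge> max 1 c" using A unfolding N1_def N2_def by simp
      then have Spos: "N1 + N2 > 0" and Sc: "N1 + N2 \<ge> c" by auto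
      have "K * (N1 + N2) \<le> (K + 1) * (N1 + N2) - c" using Sc by (simp add: algebra_simps)
      also note D
      finally have "K * (N1 + N2) \<le> A_pair \<Omega> ?N \<gamma>' H g Du tu m h m h - A_pair \<Omega> ?N \<gamma>' H g Du tu (\<lambda>_. 0) (\<lambda>_. 0) m h" .
      then show "(A_pair \<Omega> ?N \<gamma>' H g Du tu m h m h - A_pair \<Omega> ?N \<gamma>' H g Du tu (\<lambda>_. 0) (\<lambda>_. 0) m h)
              / (Lp_norm (lebesgue_on \<Omega>) (\<beta> + 1) m + Lp_norm (restrict_space \<sigma> \<Gamma>D) \<gamma>' h) \<ge> K"
        using Spos unfolding N1_def N2_def by (simp add: pos_le_divide_eq)
    qed
  qed
qed

end
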